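(* Let $K$ be a non-Archimedean local field with normalized absolute value $|\cdot|_K$, let $q$ be the cardinality of its residue field, and let $\alpha>0$. Put $d_\alpha=\dfrac{1-q^\alpha}{1-q^{-\alpha-1}}$. Let $u$ be a complex-valued function defined on the set of values $\{q^k: k\in\mathbb Z\}$ of $|\cdot|_K$ on $K\setminus\{0\}$, and suppose that for some $m\in\mathbb Z$ $$\sum_{k=-\infty}^m q^k|u(q^k)|<\infty,\qquad \sum_{l=m}^\infty q^{-\alpha l}|u(q^l)|<\infty .$$ Then for each $n\in\mathbb Z$ and each $x\in K$ with $|x|_K=q^n$, the integral $$(D^\alpha u)(x)=d_\alpha\int_K |y|_K^{-\alpha-1}\big[u(|x-y|_K)-u(|x|_K)\big]\,dy$$ exists, depends only on $|x|_K$, and $$(D^\alpha u)(q^n)=d_\alpha\Big(1-\frac1q\Big)q^{-(\alpha+1)n}\sum_{k=-\infty}^{n-1}q^k u(q^k)+q^{-\alpha n-1}\frac{q^\alpha+q-2}{1-q^{-\alpha-1}}\,u(q^n)+d_\alpha\Big(1-\frac1q\Big)\sum_{l=n+1}^\infty q^{-\alpha l}u(q^l).$$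
   Context: $K$ is a non-discrete totally disconnected locally compact field. Its absolute value is normalized: if $\beta$ generates the maximal ideal $P=\{|x|_K<1\}$ of $O=\{|x|_K\le 1\}$ and $q=|O/P|$, then $|\beta|_K=q^{-1}$, so $|\cdot|_K$ takes the values $q^N$, $N\in\mathbb Z$, on $K\setminus\{0\}$. $dx$ denotes the additive Haar measure on $K$ normalized so that $O$ has measure $1$. A function $x\mapsto u(|x|_K)$ is called radial. *)

theory Defs
  imports "HOL-Analysis.Analysis" "HOL-Probability.Probability"
begin

text \<open>A non-Archimedean local field K (non-discrete, totally disconnected, locally compact)
  is modelled as a field type 'a carrying a non-Archimedean absolute value av
  which is discrete, normalized (values q^N, N integer, with some beta of value 1/q,
  q the cardinality of the residue field O/P), non-trivial, with finite residue
  field and complete.\<close>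

definition int_ring :: "('a::field \<Rightarrow> real) \<Rightarrow> 'a set" where
  "int_ring av = {x. av x \<le> 1}"

definition residue_classes :: "('a::field \<Rightarrow> real) \<Rightarrow> 'a set set" where
  "residue_classes av = (\<lambda>x. {y \<in> int_ring av. av (x - y) < 1}) ` int_ring av"

definition av_complete :: "('a::field \<Rightarrow> real) \<Rightarrow> bool" where
  "av_complete av \<longleftrightarrow>
     (\<forall>s::nat \<Rightarrow> 'a. (\<forall>e>0. \<exists>N. \<forall>m\<ge>N. \<forall>n\<ge>N. av (s m - s n) < e) \<longrightarrow>
        (\<exists>L. \<forall>e>0. \<exists>N. \<forall>n\<ge>N. av (s n - L) < e))"

definition nonarch_local_field :: "('a::field \<Rightarrow> real) \<Rightarrow> nat \<Rightarrow> bool" where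
  "nonarch_local_field av q \<longleftrightarrow>
     (\<forall>x. 0 \<le> av x) \<and> (\<forall>x. av x = 0 \<longleftrightarrow> x = 0) \<and>
     (\<forall>x y. av (x * y) = av x * av y) \<and>
     (\<forall>x y. av (x + y) \<le> max (av x) (av y)) \<and>
     2 \<le> q \<and> finite (residue_classes av) \<and> card (residue_classes av) = q \<and>
     (\<forall>x. x \<noteq> 0 \<longrightarrow> (\<exists>N::int. av x = real q powi N)) \<and>
     (\<exists>\<beta>. av \<beta> = 1 / real q) \<and>
     av_complete av"

definition closed_balls :: "('a::field \<Rightarrow> real) \<Rightarrow> 'a set set" where
  "closed_balls av = {{y. av (y - a) \<le> r} | a r. True}"

definition haar_measure :: "('a::field \<Rightarrow> real) \<Rightarrow> 'a measure \<Rightarrow> bool" where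
  "haar_measure av M \<longleftrightarrow>
     space M = UNIV \<and> sets M = sigma_sets UNIV (closed_balls av) \<and>
     (\<forall>A\<in>sets M. \<forall>a. emeasure M ((\<lambda>x. a + x) ` A) = emeasure M A) \<and>
     emeasure M (int_ring av) = 1"

end

theory Submission
  imports Defs "HOL-Library.Nat_Bijection"
begin

lemma piecewise_integral:
  fixes A :: "int \<Rightarrow> 'a set" and c :: "int \<Rightarrow> complex" and f :: "'a \<Rightarrow> complex"
  assumes meas: "\<And>j. A j \<in> sets M"
    and fin: "\<And>j. emeasure M (A j) < \<infinity>"
    and disj: "\<And>i j y. y \<in> A i \<Longrightarrow> y \<in> A j \<Longrightarrow> i = j"
    and fin_val: "\<And>j y. y \<in> A j \<Longrightarrow> f y = c j"
    and zero: "\<And>y. (\<And>j. y \<notin> A j) \<Longrightarrow> f y = 0"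
    and summ: "(\<lambda>j. norm (c j) * measure M (A j)) summable_on UNIV"
  shows "integrable M f \<and> ((\<lambda>j. c j * complex_of_real (measure M (A j))) has_sum integral\<^sup>L M f) UNIV"
proof -
  define e where "e = int_decode"
  have be: "bij e" unfolding e_def by (rule bij_int_decode)
  define g where "g i y = indicator (A (e i)) y *\<^sub>R c (e i)" for i y
  have fsum: "f y = (\<Sum>i. g i y)" for y
  proof (cases "\<exists>j. y \<in> A j")
    case True
    then obtain j where j: "y \<in> A j" by blast
    obtain i where i: "e i = j" using be by (metis bij_pointE)
    have "g k y = (if k = i then c j else 0)" for k
    proof (cases "k = i")
      case False
      then have "e k \<noteq> j" using i be by (metis bij_pointE)
      then have "y \<notin> A (e k)" using disj[of y "e k" j] j by blast
      then show ?thesis using False unfolding g_def by simp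
    qed (use i j in \<open>simp add: g_def\<close>)
    then have "(\<lambda>k. g k y) sums c j" using sums_single[of i "\<lambda>_. c j"] by simp
    then show ?thesis using fin_val[OF j] by (simp add: sums_iff)
  next
    case False
    then have "g k y = 0" for k unfolding g_def by auto
    then show ?thesis using False zero by auto
  qed
  have gint: "integrable M (g i)" for i
    unfolding g_def
    by (rule integrable_scaleR_left) (use meas fin in \<open>auto simp: integrable_indicator_iff\<close>)
  have nint: "(\<integral>y. norm (g i y) \<partial>M) = norm (c (e i)) * measure M (A (e i))" for i
    unfolding g_def using Int_absorb2[OF sets.sets_into_space[OF meas[of "e i"]]]
    by (simp add: mult.commute)
  have ig: "integral\<^sup>L M (g i) = c (e i) * complex_of_real (measure M (A (e i)))" for i
    unfolding g_def using Int_absorb2[OF sets.sets_into_space[OF meas[of "e i"]]]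
    by (simp add: scaleR_conv_of_real mult.commute)
  have summ_nat: "summable (\<lambda>i. norm (c (e i)) * measure M (A (e i)))"
  proof -
    have "(\<lambda>i. norm (c (e i)) * measure M (A (e i))) summable_on UNIV"
      using summ summable_on_reindex_bij_betw[of e UNIV UNIV "\<lambda>j. norm (c j) * measure M (A j)"] be by (simp add: bij_betw_def)
    then show ?thesis by (subst (asm) summable_on_UNIV_nonneg_real_iff) auto
  qed
  have ae: "AE y in M. summable (\<lambda>i. norm (g i y))"
  proof (rule AE_I2)
    fix y
    show "summable (\<lambda>i. norm (g i y))"
    proof (cases "\<exists>j. y \<in> A j")
      case True
      then obtain j where j: "y \<in> A j" by blast
      obtain i where i: "e i = j" using be by (metis bij_pointE)
      have "norm (g k y) = (if k = i then norm (c j) else 0)" for k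
      proof (cases "k = i")
        case False
        then have "e k \<noteq> j" using i be by (metis bij_pointE)
        then have "y \<notin> A (e k)" using disj[of y "e k" j] j by blast
        then show ?thesis using False unfolding g_def by simp
      qed (use i j in \<open>simp add: g_def\<close>)
      then show ?thesis using sums_single[of i "\<lambda>_. norm (c j)"] by (simp add: sums_iff)
    next
      case False
      then have "g k y = 0" for k unfolding g_def by auto
      then show ?thesis by simp
    qed
  qed
  have s2: "summable (\<lambda>i. \<integral>y. norm (g i y) \<partial>M)" using summ_nat by (simp add: nint)
  have I: "integrable M (\<lambda>y. \<Sum>i. g i y)" by (rule integrable_suminf[OF gint ae s2])
  have S: "(\<lambda>i. integral\<^sup>L M (g i)) sums (\<integral>y. (\<Sum>i. g i y) \<partial>M)" by (rule sums_integral[OF gint ae s2])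
  have fe: "f = (\<lambda>y. \<Sum>i. g i y)" using fsum by auto
  have "((\<lambda>i. c (e i) * complex_of_real (measure M (A (e i)))) has_sum integral\<^sup>L M f) UNIV"
    apply (rule norm_summable_imp_has_sum)
    using summ_nat apply (simp add: norm_mult)
    using S fe ig by simp
  then have "((\<lambda>j. c j * complex_of_real (measure M (A j))) has_sum integral\<^sup>L M f) UNIV"
    using has_sum_reindex_bij_betw[of e UNIV UNIV "\<lambda>j. c j * complex_of_real (measure M (A j))"] be
    by (simp add: bij_betw_def)
  then show ?thesis using I fe by simp
qed

locale NALF =
  fixes av :: "'a::field \<Rightarrow> real" and q :: nat
  assumes K: "nonarch_local_field av q"
begin

abbreviation Q where "Q \<equiv> real q"

lemmas Kd = K[unfolded nonarch_local_field_def]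

lemma nonneg: "0 \<le> av x" using Kd[THEN conjunct1] by simp
lemma zero_iff: "av x = 0 \<longleftrightarrow> x = 0" using Kd[THEN conjunct2, THEN conjunct1] by simp
lemma mult: "av (x * y) = av x * av y" using Kd[THEN conjunct2, THEN conjunct2, THEN conjunct1] by simp
lemma ultra: "av (x + y) \<le> max (av x) (av y)" using Kd[THEN conjunct2, THEN conjunct2, THEN conjunct2, THEN conjunct1] by simp
lemma q2: "2 \<le> q" using Kd[THEN conjunct2, THEN conjunct2, THEN conjunct2, THEN conjunct2, THEN conjunct1] by simp
lemma Q1: "1 < Q" using q2 by simp
lemma Qpos: "0 < Q" using q2 by simp
lemma vals: "x \<noteq> 0 \<Longrightarrow> \<exists>N::int. av x = Q powi N" using Kd[THEN conjunct2, THEN conjunct2, THEN conjunct2, THEN conjunct2, THEN conjunct2, THEN conjunct2, THEN conjunct2, THEN conjunct1] by simp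
lemma beta: "\<exists>\<beta>. av \<beta> = 1 / Q" using Kd[THEN conjunct2, THEN conjunct2, THEN conjunct2, THEN conjunct2, THEN conjunct2, THEN conjunct2, THEN conjunct2, THEN conjunct2, THEN conjunct1] by simp
lemma res_fin: "finite (residue_classes av)" using Kd[THEN conjunct2, THEN conjunct2, THEN conjunct2, THEN conjunct2, THEN conjunct2, THEN conjunct1] by simp
lemma res_card: "card (residue_classes av) = q" using Kd[THEN conjunct2, THEN conjunct2, THEN conjunct2, THEN conjunct2, THEN conjunct2, THEN conjunct2, THEN conjunct1] by simp

lemma av0[simp]: "av 0 = 0" using zero_iff by simp
lemma av1[simp]: "av 1 = 1"
proof -
  have "av 1 = av 1 * av 1" using mult[of 1 1] by simp
  moreover have "av 1 \<noteq> 0" using zero_iff by simp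
  ultimately show ?thesis
  proof -
    assume a: "av 1 = av 1 * av 1" and b: "av 1 \<noteq> 0"
    have "av 1 * (av 1 - 1) = 0" using a by (simp add: algebra_simps)
    then show ?thesis using b by simp
  qed
qed
lemma avm1: "av (-1) = 1"
proof -
  have "av (-1) * av (-1) = 1" using mult[of "-1" "-1"] by simp
  then have "(av (-1) - 1) * (av (-1) + 1) = 0" by (simp add: algebra_simps)
  moreover have "av (-1) + 1 > 0" using nonneg[of "-1"] by simp
  ultimately show ?thesis by simp
qed
lemma av_neg[simp]: "av (-x) = av x"
  using mult[of "-1" x] avm1 by simp
lemma av_comm: "av (x - y) = av (y - x)"
proof -
  have "x - y = - (y - x)" by simp
  then show ?thesis by (simp only: av_neg)
qed
lemma ultra_diff: "av (x - y) \<le> max (av x) (av y)"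
  using ultra[of x "-y"] by simp
lemma strict_add: assumes "av x < av y" shows "av (x + y) = av y"
proof -
  have "av y \<le> max (av (x + y)) (av x)" using ultra_diff[of "x + y" x] by simp
  then have "av y \<le> av (x + y)" using assms by linarith
  moreover have "av (x + y) \<le> av y" using ultra[of x y] assms by simp
  ultimately show ?thesis by simp
qed
lemma strict_diff: assumes "av x < av y" shows "av (x - y) = av y" "av (y - x) = av y"
  using strict_add[of x "-y"] assms av_comm by auto

lemma Qpow_pos: "0 < Q powi k" using Qpos by simp
lemma Qpow_less_iff: "Q powi a < Q powi b \<longleftrightarrow> a < b"
proof
  assume "a < b" then show "Q powi a < Q powi b" using power_int_strict_increasing[OF _ Q1] by blast
next
  assume h: "Q powi a < Q powi b"
  show "a < b"
  proof (rule ccontr)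
    assume "\<not> a < b"
    then have "b \<le> a" by simp
    then have "Q powi b \<le> Q powi a" using power_int_increasing[of b a Q] Q1 by simp
    then show False using h by simp
  qed
qed
lemma Qpow_le_iff: "Q powi a \<le> Q powi b \<longleftrightarrow> a \<le> b"
  using Qpow_less_iff[of b a] by linarith
lemma Qpow_eq_iff: "Q powi a = Q powi b \<longleftrightarrow> a = b"
  using Qpow_le_iff[of a b] Qpow_le_iff[of b a] by (auto simp: order_antisym_conv)

lemma discrete: assumes "av x < Q powi k" shows "av x \<le> Q powi (k - 1)"
proof (cases "x = 0")
  case True then show ?thesis using Qpow_pos[of "k-1"] by simp
next
  case False
  then obtain N where N: "av x = Q powi N" using vals by blast
  then have "N < k" using assms Qpow_less_iff by simp
  then show ?thesis using N Qpow_le_iff by simp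
qed

lemma av_power: "av (x ^ n) = av x ^ n"
  by (induction n) (simp_all add: mult)
lemma av_inverse: "av (inverse x) = inverse (av x)"
proof (cases "x = 0")
  case False
  have "av x * av (inverse x) = 1" using mult[of x "inverse x"] False by simp
  then show ?thesis by (metis inverse_unique)
qed simp
lemma av_powi: "av (x powi k) = av x powi k"
  by (simp add: power_int_def av_power av_inverse power_inverse)

lemma gamma: "\<exists>g. av g = Q powi k"
proof -
  obtain b where b: "av b = 1 / Q" using beta by blast
  have "av (b powi (-k)) = (1/Q) powi (-k)" by (simp only: av_powi b)
  also have "\<dots> = Q powi k" by (simp add: power_int_minus_divide power_int_one_over)
  finally have "av (b powi (-k)) = Q powi k" .
  then show ?thesis by blast
qed

lemma av_div: "av (x / y) = av x / av y"
  by (simp add: divide_inverse mult av_inverse)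

end

locale NALFM = NALF av q for av :: "'a::field \<Rightarrow> real" and q :: nat +
  fixes M :: "'a measure"
  assumes Haar: "haar_measure av M"
begin

lemmas Hd = Haar[unfolded haar_measure_def]
lemma space_M: "space M = UNIV" using Hd[THEN conjunct1] by simp
lemma sets_M: "sets M = sigma_sets UNIV (closed_balls av)" using Hd[THEN conjunct2, THEN conjunct1] by simp
lemma transl: "A \<in> sets M \<Longrightarrow> emeasure M ((\<lambda>x. a + x) ` A) = emeasure M A"
  using Hd[THEN conjunct2, THEN conjunct2, THEN conjunct1] by simp
lemma O1: "emeasure M (int_ring av) = 1"
  using Hd[THEN conjunct2, THEN conjunct2, THEN conjunct2] by simp

definition cb where "cb a k = {y. av (y - a) \<le> Q powi k}"
definition sph where "sph a k = {y. av (y - a) = Q powi k}"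

lemma cb_sets: "cb a k \<in> sets M"
proof -
  have "cb a k \<in> closed_balls av" unfolding cb_def closed_balls_def
    by (rule CollectI, rule exI[of _ a], rule exI[of _ "Q powi k"], simp)
  then show ?thesis unfolding sets_M by (rule sigma_sets.Basic)
qed

lemma pt_sets: "{a} \<in> sets M"
proof -
  have "{a} = {y. av (y - a) \<le> 0}"
  proof (intro set_eqI iffI)
    fix y assume "y \<in> {y. av (y - a) \<le> 0}"
    then have "av (y - a) = 0" using nonneg[of "y - a"] by simp
    then have "y - a = 0" using zero_iff by blast
    then show "y \<in> {a}" by simp
  qed simp
  then have "{a} \<in> closed_balls av" unfolding closed_balls_def
    by (intro CollectI exI[of _ a] exI[of _ 0]) simp
  then show ?thesis unfolding sets_M by (rule sigma_sets.Basic)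
qed

lemma sph_eq: "sph a k = cb a k - cb a (k - 1)"
proof -
  have "av (y - a) = Q powi k \<longleftrightarrow> av (y - a) \<le> Q powi k \<and> \<not> av (y - a) \<le> Q powi (k - 1)" for y
  proof
    assume h: "av (y - a) = Q powi k"
    have "Q powi (k - 1) < Q powi k" using Qpow_less_iff by simp
    then show "av (y - a) \<le> Q powi k \<and> \<not> av (y - a) \<le> Q powi (k - 1)" using h by simp
  next
    assume h: "av (y - a) \<le> Q powi k \<and> \<not> av (y - a) \<le> Q powi (k - 1)"
    then have "\<not> av (y - a) < Q powi k" using discrete by blast
    then show "av (y - a) = Q powi k" using h by simp
  qed
  then show ?thesis unfolding sph_def cb_def by (intro set_eqI) simp
qed

lemma sph_sets: "sph a k \<in> sets M"
  unfolding sph_eq using cb_sets by (rule sets.Diff) (rule cb_sets)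

lemma cb_transl: "cb a k = (\<lambda>x. a + x) ` cb 0 k"
proof -
  have "y \<in> cb a k \<longleftrightarrow> y - a \<in> cb 0 k" for y unfolding cb_def by simp
  show ?thesis
  proof (intro set_eqI iffI)
    fix y assume "y \<in> cb a k"
    then have "y - a \<in> cb 0 k" "y = a + (y - a)" unfolding cb_def by simp_all
    then show "y \<in> (\<lambda>x. a + x) ` cb 0 k" by (rule rev_image_eqI)
  next
    fix y assume "y \<in> (\<lambda>x. a + x) ` cb 0 k"
    then show "y \<in> cb a k" unfolding cb_def by auto
  qed
qed

lemma cb_meas_transl: "emeasure M (cb a k) = emeasure M (cb 0 k)"
proof -
  have "emeasure M ((\<lambda>x. a + x) ` cb 0 k) = emeasure M (cb 0 k)" by (rule transl[OF cb_sets])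
  then show ?thesis using cb_transl[of a k] by simp
qed

lemma tri: "av (x - z) \<le> max (av (x - y)) (av (y - z))"
proof -
  have "x - z = (x - y) + (y - z)" by simp
  then show ?thesis using ultra[of "x - y" "y - z"] by simp
qed

lemma cb_same: assumes "w \<in> cb c1 k" "w \<in> cb c2 k" shows "cb c1 k = cb c2 k"
proof -
  have t: "av (c1 - c2) \<le> max (av (c1 - w)) (av (w - c2))" by (rule tri)
  have a1: "av (c1 - w) \<le> Q powi k" using assms(1) av_comm[of c1 w] unfolding cb_def by simp
  have a2: "av (w - c2) \<le> Q powi k" using assms(2) unfolding cb_def by simp
  have h1: "av (c1 - c2) \<le> Q powi k" using t a1 a2 by linarith
  have h2: "av (c2 - c1) \<le> Q powi k" using h1 av_comm[of c1 c2] by simp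
  have "av (y - c1) \<le> Q powi k \<longleftrightarrow> av (y - c2) \<le> Q powi k" for y
  proof
    assume "av (y - c1) \<le> Q powi k"
    then show "av (y - c2) \<le> Q powi k" using tri[where x=y and y=c1 and z=c2] h1 by linarith
  next
    assume "av (y - c2) \<le> Q powi k"
    then show "av (y - c1) \<le> Q powi k" using tri[where x=y and y=c2 and z=c1] h2 by linarith
  qed
  then show ?thesis unfolding cb_def by (intro set_eqI) simp
qed

lemma step: "emeasure M (cb 0 k) = of_nat q * emeasure M (cb 0 (k - 1))"
proof -
  obtain g where g: "av g = Q powi k" using gamma by blast
  have g0: "g \<noteq> 0" using g Qpow_pos[of k] by auto
  define C where "C = (\<lambda>S. (\<lambda>y. g * y) ` S) ` residue_classes av"
  have img: "(\<lambda>y. g * y) ` {y \<in> int_ring av. av (x - y) < 1} = cb (g * x) (k - 1)"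
    if x: "x \<in> int_ring av" for x
  proof
    show "(\<lambda>y. g * y) ` {y \<in> int_ring av. av (x - y) < 1} \<subseteq> cb (g * x) (k - 1)"
    proof clarify
      fix y assume y: "y \<in> int_ring av" "av (x - y) < 1"
      have "g * y - g * x = g * (y - x)" by (simp add: right_diff_distrib)
      then have "av (g * y - g * x) = Q powi k * av (y - x)" by (simp add: mult g)
      also have "av (y - x) = av (x - y)" by (rule av_comm)
      finally have "av (g * y - g * x) = Q powi k * av (x - y)" .
      also have "\<dots> < Q powi k" using y(2) Qpow_pos[of k] by simp
      finally show "g * y \<in> cb (g * x) (k - 1)" unfolding cb_def using discrete by blast
    qed
  next
    show "cb (g * x) (k - 1) \<subseteq> (\<lambda>y. g * y) ` {y \<in> int_ring av. av (x - y) < 1}"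
    proof
      fix z assume z: "z \<in> cb (g * x) (k - 1)"
      define y where "y = z / g"
      have zy: "z = g * y" unfolding y_def using g0 by simp
      have "x - y = (g * x - z) / g" unfolding y_def using g0 by (simp add: field_simps)
      then have "av (x - y) = av (z - g * x) / Q powi k" using av_comm by (simp add: av_div g)
      also have "\<dots> \<le> Q powi (k - 1) / Q powi k"
        using z Qpow_pos[of k] unfolding cb_def by (simp add: divide_right_mono)
      also have "\<dots> = 1 / Q" using Qpos by (simp add: power_int_diff)
      also have "\<dots> < 1" using Q1 by simp
      finally have xy: "av (x - y) < 1" .
      have "av y \<le> max (av x) (av (x - y))" using ultra_diff[of x "x - y"] by simp
      then have "av y \<le> 1" using x xy unfolding int_ring_def by simp
      then show "z \<in> (\<lambda>y. g * y) ` {y \<in> int_ring av. av (x - y) < 1}"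
        using zy xy unfolding int_ring_def by blast
    qed
  qed
  have Cballs: "\<exists>c. S = cb c (k - 1) \<and> av c \<le> Q powi k" if "S \<in> C" for S
  proof -
    obtain x where x: "x \<in> int_ring av" "S = (\<lambda>y. g * y) ` {y \<in> int_ring av. av (x - y) < 1}"
      using \<open>S \<in> C\<close> unfolding C_def residue_classes_def by blast
    have "av (g * x) \<le> Q powi k" using x(1) Qpow_pos[of k] unfolding int_ring_def by (simp add: mult g)
    then show ?thesis using img[OF x(1)] x(2) by blast
  qed
  have UC: "\<Union>C = cb 0 k"
  proof
    show "\<Union>C \<subseteq> cb 0 k"
    proof
      fix z assume "z \<in> \<Union>C"
      then obtain S where S: "S \<in> C" "z \<in> S" by blast
      obtain c where c: "S = cb c (k - 1)" "av c \<le> Q powi k" using Cballs[OF S(1)] by blast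
      have "Q powi (k - 1) \<le> Q powi k" using Qpow_le_iff by simp
      moreover have "av (z - 0) \<le> max (av (z - c)) (av (c - 0))" by (rule tri)
      ultimately show "z \<in> cb 0 k" using S(2) c unfolding cb_def by simp
    qed
  next
    show "cb 0 k \<subseteq> \<Union>C"
    proof
      fix z assume z: "z \<in> cb 0 k"
      define x where "x = z / g"
      have "av x = av z / Q powi k" unfolding x_def by (simp add: av_div g)
      also have "\<dots> \<le> 1" using z Qpow_pos[of k] unfolding cb_def by simp
      finally have x: "x \<in> int_ring av" unfolding int_ring_def by simp
      have gx: "g * x = z" unfolding x_def using g0 by simp
      have "{y \<in> int_ring av. av (x - y) < 1} \<in> residue_classes av"
        unfolding residue_classes_def using x by blast
      moreover have "cb z (k - 1) = (\<lambda>y. g * y) ` {y \<in> int_ring av. av (x - y) < 1}"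
        using img[OF x] gx by simp
      ultimately have "cb z (k - 1) \<in> C" unfolding C_def by (rule rev_image_eqI)
      moreover have "z \<in> cb z (k - 1)" unfolding cb_def using Qpow_pos by simp
      ultimately show "z \<in> \<Union>C" by blast
    qed
  qed
  have finC: "finite C" unfolding C_def using res_fin by simp
  have injg: "inj (\<lambda>y. g * y)" using g0 by (auto intro: injI)
  have cardC: "card C = q"
  proof -
    have "inj_on (\<lambda>S. (\<lambda>y. g * y) ` S) (residue_classes av)"
      using inj_image_eq_iff[OF injg] by (auto intro: inj_onI)
    then show ?thesis unfolding C_def using res_card by (simp add: card_image)
  qed
  have disjC: "disjoint_family_on (\<lambda>S. S) C"
    unfolding disjoint_family_on_def
  proof (intro ballI impI)
    fix S T assume S: "S \<in> C" and T: "T \<in> C" and ne: "S \<noteq> T"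
    show "S \<inter> T = {}"
    proof (rule ccontr)
      assume "S \<inter> T \<noteq> {}"
      then obtain w where w: "w \<in> S" "w \<in> T" by blast
      obtain c where c: "S = cb c (k - 1)" using Cballs[OF S] by blast
      obtain d where d: "T = cb d (k - 1)" using Cballs[OF T] by blast
      have "S = T" using cb_same[of w c "k - 1" d] w c d by simp
      then show False using ne by simp
    qed
  qed
  have setsC: "(\<lambda>S. S) ` C \<subseteq> sets M" using Cballs cb_sets by auto
  have "emeasure M (cb 0 k) = emeasure M (\<Union>S\<in>C. S)" using UC by simp
  also have "\<dots> = (\<Sum>S\<in>C. emeasure M S)" using sum_emeasure[OF setsC disjC finC] by simp
  also have "\<dots> = (\<Sum>S\<in>C. emeasure M (cb 0 (k - 1)))"
  proof (rule sum.cong[OF refl])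
    fix S assume "S \<in> C"
    then obtain c where c: "S = cb c (k - 1)" using Cballs by blast
    show "emeasure M S = emeasure M (cb 0 (k - 1))" using c cb_meas_transl[of c "k - 1"] by simp
  qed
  also have "\<dots> = of_nat q * emeasure M (cb 0 (k - 1))" using cardC by simp
  finally show ?thesis .
qed

lemma cb00: "cb 0 0 = int_ring av" unfolding cb_def int_ring_def by simp

lemma emeasure_cb0: "emeasure M (cb 0 k) = ennreal (Q powi k)"
proof (induction k rule: int_induct[where k=0])
  case base
  then show ?case using cb00 O1 by simp
next
  case (step1 i)
  have "emeasure M (cb 0 (i + 1)) = of_nat q * ennreal (Q powi i)" using step[of "i + 1"] step1 by simp
  also have "\<dots> = ennreal (Q * Q powi i)"
    by (simp add: ennreal_mult ennreal_of_nat_eq_real_of_nat)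
  also have "Q * Q powi i = Q powi (i + 1)" using Qpos by (simp add: power_int_add)
  finally show ?case .
next
  case (step2 i)
  have "of_nat q * emeasure M (cb 0 (i - 1)) = ennreal (Q powi i)" using step[of i] step2 by simp
  also have "Q powi i = Q * Q powi (i - 1)" using Qpos by (simp add: power_int_diff)
  also have "ennreal (Q * Q powi (i - 1)) = of_nat q * ennreal (Q powi (i - 1))"
    by (simp add: ennreal_mult ennreal_of_nat_eq_real_of_nat)
  finally have "of_nat q * emeasure M (cb 0 (i - 1)) = of_nat q * ennreal (Q powi (i - 1))" .
  moreover have "(of_nat q :: ennreal) \<noteq> 0" "(of_nat q :: ennreal) \<noteq> top" using q2 by auto
  ultimately show ?case using ennreal_mult_cancel_left[of "of_nat q" "emeasure M (cb 0 (i - 1))" "ennreal (Q powi (i - 1))"] by simp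
qed

lemma emeasure_cb: "emeasure M (cb a k) = ennreal (Q powi k)"
  using cb_meas_transl[of a k] emeasure_cb0[of k] by simp

lemma emeasure_sph: "emeasure M (sph a k) = ennreal (Q powi k - Q powi (k - 1))"
proof -
  have sub: "cb a (k - 1) \<subseteq> cb a k" unfolding cb_def using Qpow_le_iff[of "k-1" k]
    by auto
  have "emeasure M (sph a k) = emeasure M (cb a k) - emeasure M (cb a (k - 1))"
    unfolding sph_eq by (rule emeasure_Diff) (use cb_sets sub emeasure_cb in auto)
  also have "\<dots> = ennreal (Q powi k - Q powi (k - 1))"
    by (simp add: emeasure_cb ennreal_minus)
  finally show ?thesis .
qed

lemma measure_sph: "measure M (sph a k) = Q powi k - Q powi (k - 1)"
proof -
  have "Q powi (k - 1) \<le> Q powi k" using Qpow_le_iff by simp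
  then show ?thesis unfolding measure_def emeasure_sph by simp
qed

lemma measure_pt: "measure M {a} = 0"
proof -
  have fin: "emeasure M {a} \<noteq> \<top>"
  proof -
    have "emeasure M {a} \<le> emeasure M (cb a 0)"
      apply (rule emeasure_mono) apply (simp add: cb_def) apply (rule cb_sets) done
    then show ?thesis using emeasure_cb[of a 0] by (auto simp: top_unique)
  qed
  have le: "measure M {a} \<le> Q powi k" for k
  proof -
    have "emeasure M {a} \<le> emeasure M (cb a k)"
      apply (rule emeasure_mono) apply (simp add: cb_def less_imp_le[OF Qpow_pos]) apply (rule cb_sets) done
    then have "ennreal (measure M {a}) \<le> ennreal (Q powi k)"
      using emeasure_eq_ennreal_measure[OF fin] emeasure_cb by simp
    then show ?thesis using Qpow_pos[of k] by (simp add: ennreal_le_iff)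
  qed
  show ?thesis
  proof (rule ccontr)
    assume "measure M {a} \<noteq> 0"
    moreover have "measure M {a} \<ge> 0" by (rule measure_nonneg)
    ultimately have pos: "measure M {a} > 0" by linarith
    obtain n where n: "(1 / Q) ^ n < measure M {a}"
      using real_arch_pow_inv[OF pos, of "1 / Q"] Q1 by auto
    have "Q powi (- int n) = (1 / Q) ^ n" by (simp add: power_int_minus power_one_over inverse_eq_divide)
    then show False using le[of "- int n"] n by simp
  qed
qed

lemma emeasure_sph_fin: "emeasure M (sph a k) < \<infinity>" using emeasure_sph by simp
lemma emeasure_pt_fin: "emeasure M {a} < \<infinity>"
proof -
  have "emeasure M {a} \<le> emeasure M (cb a 0)"
    apply (rule emeasure_mono) apply (simp add: cb_def) apply (rule cb_sets) done
  then have "emeasure M {a} \<le> 1" using emeasure_cb[of a 0] by simp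
  then show ?thesis using le_less_trans[of "emeasure M {a}" 1 \<top>] by simp
qed

end

lemma has_sum_diff':
  fixes f g :: "'a \<Rightarrow> 'b::{topological_ab_group_add}"
  shows "(f has_sum a) A \<Longrightarrow> (g has_sum b) A \<Longrightarrow> ((\<lambda>x. f x - g x) has_sum (a - b)) A"
proof -
  assume f: "(f has_sum a) A" and g: "(g has_sum b) A"
  have "((\<lambda>x. - g x) has_sum (- b)) A" using g by (simp add: has_sum_uminus)
  from has_sum_add[OF f this] show ?thesis by simp
qed

context NALF begin

lemma powi_powr: "(Q powi k) powr e = Q powr (real_of_int k * e)"
proof -
  have "Q powi k = Q powr (real_of_int k)" using Qpos by (simp add: powr_real_of_int')
  then show ?thesis by (simp add: powr_powr)
qed

lemma Qpowi_powr: "Q powi k = Q powr (real_of_int k)"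
  using Qpos by (simp add: powr_real_of_int')

lemma geo1: fixes n :: int shows "((\<lambda>j. Q powi j) has_sum (Q powi n / (Q - 1))) {..n-1}"
proof -
  define g where "g i = n - 1 - int i" for i :: nat
  have bij: "bij_betw g UNIV {..n-1}"
    unfolding bij_betw_def
  proof
    show "inj g" unfolding g_def by (auto intro: injI)
    show "range g = {..n-1}"
    proof (intro set_eqI iffI)
      fix j assume "j \<in> {..n-1}"
      then have "j = g (nat (n - 1 - j))" unfolding g_def by simp
      then show "j \<in> range g" by blast
    qed (auto simp: g_def)
  qed
  have eq: "Q powi (g i) = Q powi (n - 1) * (1 / Q) ^ i" for i
    unfolding g_def using Qpos
    by (simp add: power_int_diff power_int_minus power_one_over inverse_eq_divide)
  have "(\<lambda>i. (1 / Q) ^ i) sums (1 / (1 - 1 / Q))"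
    by (rule geometric_sums) (use Q1 in simp)
  then have "(\<lambda>i. Q powi (n - 1) * (1 / Q) ^ i) sums (Q powi (n - 1) * (1 / (1 - 1 / Q)))"
    by (rule sums_mult)
  then have "((\<lambda>i. Q powi (n - 1) * (1 / Q) ^ i) has_sum (Q powi (n - 1) * (1 / (1 - 1 / Q)))) UNIV"
    by (rule sums_nonneg_imp_has_sum_strong) (use Qpos in \<open>auto intro!: always_eventually\<close>)
  moreover have "Q powi (n - 1) * (1 / (1 - 1 / Q)) = Q powi n / (Q - 1)"
    using Q1 by (simp add: power_int_diff field_simps)
  ultimately have "((\<lambda>i. Q powi (g i)) has_sum (Q powi n / (Q - 1))) UNIV"
    by (simp add: eq)
  then show ?thesis using has_sum_reindex_bij_betw[OF bij, of "\<lambda>j. Q powi j"] by simp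
qed

lemma geo2: fixes \<alpha> :: real and n :: int assumes "\<alpha> > 0"
  shows "((\<lambda>j::int. Q powr (-\<alpha> * j)) has_sum (Q powr (-\<alpha> * (n + 1)) / (1 - Q powr (-\<alpha>)))) {n+1..}"
proof -
  define g where "g i = n + 1 + int i" for i :: nat
  have bij: "bij_betw g UNIV {n+1..}"
    unfolding bij_betw_def
  proof
    show "inj g" unfolding g_def by (auto intro: injI)
    show "range g = {n+1..}"
    proof (intro set_eqI iffI)
      fix j assume "j \<in> {n+1..}"
      then have "j = g (nat (j - n - 1))" unfolding g_def by simp
      then show "j \<in> range g" by blast
    qed (auto simp: g_def)
  qed
  define t where "t = Q powr (-\<alpha>)"
  have t0: "0 < t" unfolding t_def using Qpos by simp
  have t1: "t < 1" unfolding t_def using Q1 assms by (simp add: powr_less_one)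
  have eq: "Q powr (-\<alpha> * g i) = Q powr (-\<alpha> * (n + 1)) * t ^ i" for i
  proof -
    have "t ^ i = Q powr (-\<alpha> * real i)"
      unfolding t_def using Qpos by (simp add: powr_realpow[symmetric] powr_powr mult.commute)
    moreover have e: "-\<alpha> * real_of_int (g i) = -\<alpha> * (real_of_int n + 1) + -\<alpha> * real i"
      unfolding g_def by (simp add: algebra_simps)
    have "Q powr (-\<alpha> * real_of_int (g i)) = Q powr (-\<alpha> * (real_of_int n + 1)) * Q powr (-\<alpha> * real i)"
      by (simp only: e powr_add)
    ultimately show ?thesis by simp
  qed
  have "(\<lambda>i. t ^ i) sums (1 / (1 - t))"
    by (rule geometric_sums) (use t0 t1 in simp)
  then have "(\<lambda>i. Q powr (-\<alpha> * (n + 1)) * t ^ i) sums (Q powr (-\<alpha> * (n + 1)) * (1 / (1 - t)))"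
    by (rule sums_mult)
  then have "((\<lambda>i. Q powr (-\<alpha> * (n + 1)) * t ^ i) has_sum (Q powr (-\<alpha> * (n + 1)) * (1 / (1 - t)))) UNIV"
    by (rule sums_nonneg_imp_has_sum_strong) (use t0 in \<open>auto intro!: always_eventually\<close>)
  then have h: "((\<lambda>i. Q powr (-\<alpha> * (n + 1)) * t ^ i) has_sum (Q powr (-\<alpha> * (n + 1)) / (1 - t))) UNIV"
    by simp
  have fe: "(\<lambda>i. Q powr (-\<alpha> * g i)) = (\<lambda>i. Q powr (-\<alpha> * (n + 1)) * t ^ i)"
    by (rule ext) (rule eq)
  have "((\<lambda>i. Q powr (-\<alpha> * g i)) has_sum (Q powr (-\<alpha> * (n + 1)) / (1 - t))) UNIV"
    unfolding fe by (rule h)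
  then show ?thesis using has_sum_reindex_bij_betw[OF bij, of "\<lambda>j. Q powr (-\<alpha> * j)"]
    unfolding t_def by simp
qed

end

context NALF begin

lemma coef:
  fixes \<alpha> :: real and n :: int
  assumes \<alpha>: "\<alpha> > 0"
  shows "- ((1 - Q powr \<alpha>) / (1 - Q powr (-\<alpha> - 1)) *
      (Q powr (real_of_int n * (-\<alpha> - 1)) * (1 - 1 / Q) * (Q powi n / (Q - 1))
       + (1 - 1 / Q) * (Q powr (-\<alpha> * (n + 1)) / (1 - Q powr (-\<alpha>)))))
    = Q powr (-\<alpha> * n - 1) * (Q powr \<alpha> + Q - 2) / (1 - Q powr (-\<alpha> - 1))"
proof -
  define a where "a = Q powr (-\<alpha> * n)"
  define t where "t = Q powr \<alpha>"
  define N where "N = Q powi n"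
  have a0: "a > 0" unfolding a_def using Qpos by simp
  have N0: "N > 0" unfolding N_def using Qpos by simp
  have t1: "t > 1" unfolding t_def using Q1 \<alpha> by simp
  have Qm: "Q powr (- real_of_int n) = 1 / N"
    unfolding N_def Qpowi_powr using Qpos by (simp add: powr_minus divide_inverse)
  have h1: "Q powr (real_of_int n * (-\<alpha> - 1)) = a / N"
  proof -
    have "real_of_int n * (-\<alpha> - 1) = -\<alpha> * n + - real_of_int n" by (simp add: algebra_simps)
    then have "Q powr (real_of_int n * (-\<alpha> - 1)) = a * Q powr (- real_of_int n)"
      unfolding a_def by (simp only: powr_add)
    then show ?thesis using Qm by simp
  qed
  have h3: "Q powr (-\<alpha>) = 1 / t" unfolding t_def by (simp add: powr_minus divide_inverse)
  have h2: "Q powr (-\<alpha> * (n + 1)) = a / t"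
  proof -
    have "-\<alpha> * (real_of_int n + 1) = -\<alpha> * n + -\<alpha>" by (simp add: algebra_simps)
    then have "Q powr (-\<alpha> * (real_of_int n + 1)) = a * Q powr (-\<alpha>)"
      unfolding a_def by (simp only: powr_add)
    then show ?thesis using h3 by simp
  qed
  have h4: "Q powr (-\<alpha> - 1) = 1 / (t * Q)"
  proof -
    have "-\<alpha> - 1 = -\<alpha> + -1" by simp
    then have "Q powr (-\<alpha> - 1) = Q powr (-\<alpha>) * Q powr (-1)" by (simp only: powr_add)
    then show ?thesis using h3 Qpos by (simp add: powr_minus divide_inverse)
  qed
  have h5: "Q powr (-\<alpha> * n - 1) = a / Q"
  proof -
    have "-\<alpha> * n - 1 = -\<alpha> * n + -1" by simp
    then have "Q powr (-\<alpha> * n - 1) = a * Q powr (-1)" unfolding a_def by (simp only: powr_add)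
    then show ?thesis using Qpos by (simp add: powr_minus divide_inverse)
  qed
  have tQ: "t * Q > 1" using t1 Q1 by (metis less_1_mult)
  have p1: "t - 1 > 0" using t1 by simp
  have p2: "t * Q - 1 > 0" using tQ by simp
  have p3: "Q - 1 > 0" using Q1 by simp
  have eA: "a / N * (1 - 1 / Q) * (N / (Q - 1)) = a / Q" using N0 p3 by (simp add: field_simps)
  have eB: "(1 - 1 / Q) * (a / t / (1 - 1 / t)) = (Q - 1) * a / (Q * (t - 1))"
    using p1 p3 Qpos t1 by (simp add: field_simps)
  have ed: "(1 - t) / (1 - 1 / (t * Q)) = - (t - 1) * (t * Q) / (t * Q - 1)"
    using p2 Qpos t1 by (simp add: field_simps)
  have eR: "a / Q * (t + Q - 2) / (1 - 1 / (t * Q)) = t * a * (t + Q - 2) / (t * Q - 1)"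
    using p2 Qpos t1 by (simp add: field_simps)
  have fin: "- (- (t - 1) * (t * Q) / (t * Q - 1) * (a / Q + (Q - 1) * a / (Q * (t - 1))))
      = t * a * (t + Q - 2) / (t * Q - 1)"
  proof -
    have n1: "t - 1 \<noteq> 0" "t * Q - 1 \<noteq> 0" "Q \<noteq> 0" using p1 p2 Qpos by auto
    have i: "a / Q + (Q - 1) * a / (Q * (t - 1)) = a * (t + Q - 2) / (Q * (t - 1))"
      using n1 by (simp add: field_simps)
    have j: "(t - 1) * (t * Q) / (t * Q - 1) * (a * (t + Q - 2) / (Q * (t - 1)))
        = t * a * (t + Q - 2) / (t * Q - 1)"
    proof -
      have k: "(t - 1) * (t * Q) * (a * (t + Q - 2) / (Q * (t - 1))) = t * a * (t + Q - 2)"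
        using n1 by (simp add: field_simps)
      have "(t - 1) * (t * Q) / (t * Q - 1) * (a * (t + Q - 2) / (Q * (t - 1)))
          = ((t - 1) * (t * Q) * (a * (t + Q - 2) / (Q * (t - 1)))) / (t * Q - 1)"
        by (simp only: times_divide_eq_left)
      then show ?thesis unfolding k .
    qed
    have m: "- (- x * y / D * Y) = x * y / D * Y" for x y D Y :: real
      by simp
    show ?thesis unfolding i m by (rule j)
  qed
  show ?thesis
    unfolding h1 h2 h3 h4 h5 t_def[symmetric] N_def[symmetric] eA eB ed eR fin ..
qed

end

context NALFM begin

lemma ring1: "(p::complex) * (a - b) * (z * s) = (p * s) * (z * a - z * b)"
  by (simp add: algebra_simps)

lemma ring2: "(p::complex) * (a - b) * (z * s) = s * (p * z) * (a - b)"
  by (simp add: algebra_simps)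

lemma main:
  fixes \<alpha> :: real and u :: "real \<Rightarrow> complex" and m n :: int and x :: 'a
  assumes \<alpha>: "\<alpha> > 0"
    and sum1: "(\<lambda>k::int. real q powi k * norm (u (real q powi k))) summable_on {..m}"
    and sum2: "(\<lambda>l::int. real q powr (-\<alpha> * l) * norm (u (real q powi l))) summable_on {m..}"
    and xn: "av x = real q powi n"
  shows "integrable M (\<lambda>y. complex_of_real (av y powr (-\<alpha> - 1)) * (u (av (x - y)) - u (av x)))
    \<and> integral\<^sup>L M (\<lambda>y. complex_of_real (av y powr (-\<alpha> - 1)) * (u (av (x - y)) - u (av x))) =
      complex_of_real (Q powr (real_of_int n * (-\<alpha> - 1)) * (1 - 1 / Q)) *
        ((\<Sum>\<^sub>\<infinity>k\<in>{..n-1}. complex_of_real (real q powi k) * u (real q powi k))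
         - complex_of_real (Q powi n / (Q - 1)) * u (Q powi n))
      + complex_of_real (1 - 1 / Q) *
        ((\<Sum>\<^sub>\<infinity>l\<in>{n+1..}. complex_of_real (real q powr (-\<alpha> * l)) * u (real q powi l))
         - complex_of_real (Q powr (-\<alpha> * (n + 1)) / (1 - Q powr (-\<alpha>))) * u (Q powi n))"
proof -
  define f where "f = (\<lambda>y. complex_of_real (av y powr (-\<alpha> - 1)) * (u (av (x - y)) - u (av x)))"
  define A where "A j = (if j < n then sph x j else if j = n then {x} else sph 0 j)" for j
  define c where "c j = (if j < n then complex_of_real (Q powr (real_of_int n * (-\<alpha> - 1))) * (u (Q powi j) - u (Q powi n))
     else if j = n then complex_of_real (Q powr (real_of_int n * (-\<alpha> - 1))) * (u 0 - u (Q powi n))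
     else complex_of_real (Q powr (real_of_int j * (-\<alpha> - 1))) * (u (Q powi j) - u (Q powi n)))" for j
  define r where "r = 1 - 1 / Q"
  define K1 where "K1 = Q powr (real_of_int n * (-\<alpha> - 1)) * r"
  define un where "un = u (Q powi n)"
  have r0: "r > 0" unfolding r_def using Q1 by simp
  have x0: "x \<noteq> 0" using xn Qpow_pos[of n] by auto
  have F1: "j < n \<longrightarrow> av (y - x) = Q powi j \<and> av y = Q powi n \<and> y \<noteq> x" if y: "y \<in> A j" for y j
  proof
    assume j: "j < n"
    then have a: "av (y - x) = Q powi j" using y unfolding A_def sph_def by simp
    have "Q powi j < Q powi n" using j Qpow_less_iff by simp
    then have "av (y - x) < av x" using a xn by simp
    then have "av ((y - x) + x) = av x" by (rule strict_add)
    then have "av y = Q powi n" using xn by simp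
    moreover have "y \<noteq> x" using a Qpow_pos[of j] by auto
    ultimately show "av (y - x) = Q powi j \<and> av y = Q powi n \<and> y \<noteq> x" using a by simp
  qed
  have F2: "j = n \<longrightarrow> y = x" if y: "y \<in> A j" for y j
    using y unfolding A_def by auto
  have F3: "n < j \<longrightarrow> av y = Q powi j" if y: "y \<in> A j" for y j
    using y unfolding A_def sph_def by auto
  have disj: "i = j" if yi: "y \<in> A i" and yj: "y \<in> A j" for i j y
  proof (rule ccontr)
    assume ne: "i \<noteq> j"
    note h = F1[OF yi] F1[OF yj] F2[OF yi] F2[OF yj] F3[OF yi] F3[OF yj]
    consider "i < n" | "i = n" | "n < i" by linarith
    then show False
    proof cases
      case 1
      then have hi: "av (y - x) = Q powi i" "av y = Q powi n" "y \<noteq> x" using h by auto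
      consider "j < n" | "j = n" | "n < j" by linarith
      then show False
      proof cases
        case 1 then show False using h hi ne Qpow_eq_iff[of i j] by auto
      next
        case 2 then show False using h hi by auto
      next
        case 3 then show False using h hi Qpow_eq_iff[of n j] by auto
      qed
    next
      case 2
      then have hi: "y = x" using h by auto
      consider "j < n" | "j = n" | "n < j" by linarith
      then show False
      proof cases
        case 1 then show False using h hi by auto
      next
        case 2 then show False using ne \<open>i = n\<close> by simp
      next
        case 3 then show False using h hi xn Qpow_eq_iff[of n j] by auto
      qed
    next
      case 3
      then have hi: "av y = Q powi i" using h by auto
      consider "j < n" | "j = n" | "n < j" by linarith
      then show False
      proof cases
        case 1 then show False using h hi \<open>n < i\<close> Qpow_eq_iff[of i n] by auto
      next
        case 2 then show False using h hi xn \<open>n < i\<close> Qpow_eq_iff[of i n] by auto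
      next
        case 3 then show False using h hi ne Qpow_eq_iff[of i j] by auto
      qed
    qed
  qed
  have fin_val: "f y = c j" if y: "y \<in> A j" for y j
  proof -
    consider "j < n" | "j = n" | "n < j" by linarith
    then show ?thesis
    proof cases
      case 1
      then have h: "av (y - x) = Q powi j" "av y = Q powi n" using F1[OF y] by auto
      have "av (x - y) = Q powi j" using h(1) av_comm by simp
      then show ?thesis unfolding f_def c_def using 1 h xn by (simp add: powi_powr)
    next
      case 2
      then have "y = x" using F2[OF y] by auto
      then show ?thesis unfolding f_def c_def using 2 xn by (simp add: powi_powr)
    next
      case 3
      then have h: "av y = Q powi j" using F3[OF y] by auto
      have "av x < av y" using h xn 3 Qpow_less_iff by simp
      then have "av (x - y) = av y" by (rule strict_diff(1))
      then show ?thesis unfolding f_def c_def using 3 h xn by (simp add: powi_powr)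
    qed
  qed
  have zero: "f y = 0" if ny: "\<And>j. y \<notin> A j" for y
  proof (cases "y = 0")
    case True
    then show ?thesis unfolding f_def by simp
  next
    case False
    then obtain l where l: "av y = Q powi l" using vals by blast
    consider "l < n" | "l = n" | "n < l" by linarith
    then show ?thesis
    proof cases
      case 1
      then have "av y < av x" using l xn Qpow_less_iff by simp
      then have "av (y - x) = av x" by (rule strict_diff(1))
      then have "av (x - y) = av x" using av_comm by simp
      then show ?thesis unfolding f_def by simp
    next
      case 2
      have yx: "y \<noteq> x" using ny[of n] unfolding A_def by auto
      then have "y - x \<noteq> 0" by simp
      then obtain k where k: "av (y - x) = Q powi k" using vals by blast
      have "av (y - x) \<le> max (av y) (av x)" by (rule ultra_diff)
      then have "Q powi k \<le> Q powi n" using k l 2 xn by simp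
      then have "k \<le> n" using Qpow_le_iff by simp
      moreover have "\<not> k < n"
      proof
        assume "k < n"
        then have "y \<in> A k" unfolding A_def sph_def using k by simp
        then show False using ny by blast
      qed
      ultimately have "k = n" by simp
      then have "av (x - y) = av x" using k xn av_comm by simp
      then show ?thesis unfolding f_def by simp
    next
      case 3
      then have "y \<in> A l" unfolding A_def sph_def using l by simp
      then show ?thesis using ny by blast
    qed
  qed
  have meas: "A j \<in> sets M" for j unfolding A_def using sph_sets pt_sets by simp
  have fin: "emeasure M (A j) < \<infinity>" for j unfolding A_def using emeasure_sph_fin emeasure_pt_fin by simp
  have mA: "measure M (A j) = (if j = n then 0 else Q powi j * r)" for j
  proof -
    have "Q powi j - Q powi (j - 1) = Q powi j * r"
      unfolding r_def using Qpos by (simp add: power_int_diff field_simps)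
    then show ?thesis unfolding A_def using measure_sph measure_pt by simp
  qed
  have key: "Q powr (real_of_int j * (-\<alpha> - 1)) * Q powi j = Q powr (-\<alpha> * j)" for j
  proof -
    have "real_of_int j * (-\<alpha> - 1) + real_of_int j = -\<alpha> * j" by (simp add: algebra_simps)
    then show ?thesis unfolding Qpowi_powr by (simp only: powr_add[symmetric])
  qed
  have a1: "(\<lambda>k::int. Q powi k * norm (u (Q powi k))) summable_on {..n-1}"
  proof -
    have "(\<lambda>k::int. Q powi k * norm (u (Q powi k))) summable_on ({..m} \<union> {m<..n-1})"
      by (rule summable_on_Un_disjoint[OF sum1]) auto
    then show ?thesis by (rule summable_on_subset_banach) auto
  qed
  have a2: "(\<lambda>l::int. Q powr (-\<alpha> * l) * norm (u (Q powi l))) summable_on {n+1..}"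
  proof -
    have "(\<lambda>l::int. Q powr (-\<alpha> * l) * norm (u (Q powi l))) summable_on ({m..} \<union> {n+1..<m})"
      by (rule summable_on_Un_disjoint[OF sum2]) auto
    then show ?thesis by (rule summable_on_subset_banach) auto
  qed
  define G1 where "G1 = Q powi n / (Q - 1)"
  define G2 where "G2 = Q powr (-\<alpha> * (n + 1)) / (1 - Q powr (-\<alpha>))"
  have g1: "((\<lambda>j. Q powi j) has_sum G1) {..n-1}" unfolding G1_def by (rule geo1)
  have g2: "((\<lambda>j::int. Q powr (-\<alpha> * j)) has_sum G2) {n+1..}" unfolding G2_def by (rule geo2[OF \<alpha>])
  have ns: "(\<lambda>j. norm (c j) * measure M (A j)) summable_on UNIV"
  proof -
    have s1: "(\<lambda>j. norm (c j) * measure M (A j)) summable_on {..n-1}"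
    proof (rule summable_on_comparison_test)
      show "(\<lambda>j. K1 * (Q powi j * norm (u (Q powi j))) + K1 * norm un * Q powi j) summable_on {..n-1}"
        by (intro summable_on_add summable_on_cmult_right a1 has_sum_imp_summable[OF g1])
    next
      fix j assume "j \<in> {..n-1}"
      then have j: "j < n" by simp
      have "norm (c j) * measure M (A j) = K1 * (Q powi j * norm (u (Q powi j) - un))"
        unfolding c_def K1_def un_def mA using j Qpos by (simp add: norm_mult)
      also have "\<dots> \<le> K1 * (Q powi j * (norm (u (Q powi j)) + norm un))"
        unfolding K1_def using r0 Qpos by (intro mult_left_mono norm_triangle_ineq4) auto
      finally show "norm (c j) * measure M (A j) \<le> K1 * (Q powi j * norm (u (Q powi j))) + K1 * norm un * Q powi j"
        by (simp add: algebra_simps)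
    next
      fix j show "0 \<le> norm (c j) * measure M (A j)" by simp
    qed
    have s3: "(\<lambda>j. norm (c j) * measure M (A j)) summable_on {n+1..}"
    proof (rule summable_on_comparison_test)
      show "(\<lambda>j. r * (Q powr (-\<alpha> * j) * norm (u (Q powi j))) + r * norm un * Q powr (-\<alpha> * j)) summable_on {n+1..}"
        by (intro summable_on_add summable_on_cmult_right a2 has_sum_imp_summable[OF g2])
    next
      fix j assume "j \<in> {n+1..}"
      then have j: "n < j" by simp
      have "norm (c j) * measure M (A j) = r * ((Q powr (real_of_int j * (-\<alpha> - 1)) * Q powi j) * norm (u (Q powi j) - un))"
        unfolding c_def un_def mA using j Qpos by (simp add: norm_mult)
      also have "\<dots> = r * (Q powr (-\<alpha> * j) * norm (u (Q powi j) - un))" unfolding key ..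
      also have "\<dots> \<le> r * (Q powr (-\<alpha> * j) * (norm (u (Q powi j)) + norm un))"
        using r0 by (intro mult_left_mono norm_triangle_ineq4) auto
      finally show "norm (c j) * measure M (A j) \<le> r * (Q powr (-\<alpha> * j) * norm (u (Q powi j))) + r * norm un * Q powr (-\<alpha> * j)"
        by (simp add: algebra_simps)
    next
      fix j show "0 \<le> norm (c j) * measure M (A j)" by simp
    qed
    have s2: "(\<lambda>j. norm (c j) * measure M (A j)) summable_on {n}" by simp
    have "(\<lambda>j. norm (c j) * measure M (A j)) summable_on ({..n-1} \<union> {n} \<union> {n+1..})"
      by (intro summable_on_Un_disjoint s1 s2 s3) auto
    moreover have "{..n-1} \<union> {n} \<union> {n+1..} = (UNIV :: int set)" by auto
    ultimately show ?thesis by simp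
  qed
  have PI: "integrable M f \<and> ((\<lambda>j. c j * complex_of_real (measure M (A j))) has_sum integral\<^sup>L M f) UNIV"
    by (rule piecewise_integral[OF meas fin disj fin_val zero ns])
  define S1 where "S1 = (\<Sum>\<^sub>\<infinity>k\<in>{..n-1}. complex_of_real (real q powi k) * u (real q powi k))"
  define S2 where "S2 = (\<Sum>\<^sub>\<infinity>l\<in>{n+1..}. complex_of_real (real q powr (-\<alpha> * l)) * u (real q powi l))"
  have hS1: "((\<lambda>k. complex_of_real (real q powi k) * u (real q powi k)) has_sum S1) {..n-1}"
  proof -
    have e: "(\<lambda>k. norm (complex_of_real (real q powi k) * u (real q powi k))) = (\<lambda>k. Q powi k * norm (u (Q powi k)))"
      by (rule ext) (simp only: norm_mult norm_of_real abs_of_pos[OF Qpow_pos])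
    have "(\<lambda>k. norm (complex_of_real (real q powi k) * u (real q powi k))) summable_on {..n-1}"
      unfolding e by (rule a1)
    note ab = this
    show ?thesis unfolding S1_def by (rule has_sum_infsum[OF abs_summable_summable[OF ab]])
  qed
  have hS2: "((\<lambda>l. complex_of_real (real q powr (-\<alpha> * l)) * u (real q powi l)) has_sum S2) {n+1..}"
  proof -
    have "(\<lambda>l. norm (complex_of_real (real q powr (-\<alpha> * l)) * u (real q powi l))) summable_on {n+1..}"
      using a2 Qpos by (simp add: norm_mult)
    note ab = this
    show ?thesis unfolding S2_def by (rule has_sum_infsum[OF abs_summable_summable[OF ab]])
  qed
  define w where "w j = c j * complex_of_real (measure M (A j))" for j
  have w1: "(w has_sum (complex_of_real K1 * (S1 - complex_of_real G1 * un))) {..n-1}"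
  proof -
    have prev: "((\<lambda>j. complex_of_real (Q powi j) * un) has_sum (complex_of_real G1 * un)) {..n-1}"
      by (rule has_sum_cmult_left) (rule has_sum_of_real[OF g1])
    have hg: "((\<lambda>j. complex_of_real K1 * (complex_of_real (Q powi j) * u (Q powi j) - complex_of_real (Q powi j) * un))
        has_sum (complex_of_real K1 * (S1 - complex_of_real G1 * un))) {..n-1}"
      by (rule has_sum_cmult_right[OF has_sum_diff'[OF hS1 prev]])
    moreover have eqw: "w j = complex_of_real K1 * (complex_of_real (Q powi j) * u (Q powi j) - complex_of_real (Q powi j) * un)"
      if "j \<in> {..n-1}" for j
    proof -
      have j: "j < n" using that by simp
      have cj: "c j = complex_of_real (Q powr (real_of_int n * (-\<alpha> - 1))) * (u (Q powi j) - un)"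
        unfolding c_def un_def using j by simp
      have mj: "complex_of_real (measure M (A j)) = complex_of_real (Q powi j) * complex_of_real r"
        using mA[of j] j by simp
      show ?thesis unfolding w_def cj mj K1_def of_real_mult by (rule ring1)
    qed
    show ?thesis
      apply (subst has_sum_cong[where A="{..n-1}" and g="\<lambda>j. complex_of_real K1 * (complex_of_real (Q powi j) * u (Q powi j) - complex_of_real (Q powi j) * un)"])
       apply (erule eqw)
      apply (rule hg)
      done
  qed
  have w3: "(w has_sum (complex_of_real r * (S2 - complex_of_real G2 * un))) {n+1..}"
  proof -
    have prev: "((\<lambda>j. complex_of_real (Q powr (-\<alpha> * j)) * un) has_sum (complex_of_real G2 * un)) {n+1..}"
      by (rule has_sum_cmult_left) (rule has_sum_of_real[OF g2])
    have hg: "((\<lambda>j. complex_of_real r * (complex_of_real (Q powr (-\<alpha> * j)) * u (Q powi j) - complex_of_real (Q powr (-\<alpha> * j)) * un))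
        has_sum (complex_of_real r * (S2 - complex_of_real G2 * un))) {n+1..}"
      by (rule has_sum_cmult_right[OF has_sum_diff'[OF hS2 prev]])
    moreover have eqw: "w j = complex_of_real r * (complex_of_real (Q powr (-\<alpha> * j)) * u (Q powi j) - complex_of_real (Q powr (-\<alpha> * j)) * un)"
      if "j \<in> {n+1..}" for j
    proof -
      have j: "n < j" using that by simp
      have "w j = complex_of_real (Q powr (real_of_int j * (-\<alpha> - 1))) * (u (Q powi j) - un) * complex_of_real (Q powi j * r)"
        unfolding w_def c_def mA un_def using j by simp
      also have "\<dots> = complex_of_real r * (complex_of_real (Q powr (real_of_int j * (-\<alpha> - 1)) * Q powi j)) * (u (Q powi j) - un)"
        unfolding of_real_mult by (rule ring2)
      also have "\<dots> = complex_of_real r * (complex_of_real (Q powr (-\<alpha> * j))) * (u (Q powi j) - un)"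
        unfolding key ..
      finally show ?thesis by (simp only: right_diff_distrib mult.assoc)
    qed
    show ?thesis
      apply (subst has_sum_cong[where A="{n+1..}" and g="\<lambda>j. complex_of_real r * (complex_of_real (Q powr (-\<alpha> * j)) * u (Q powi j) - complex_of_real (Q powr (-\<alpha> * j)) * un)"])
       apply (erule eqw)
      apply (rule hg)
      done
  qed
  have w2: "(w has_sum 0) {n}" by (rule has_sum_finiteI) (simp_all add: w_def mA)
  have "(w has_sum (complex_of_real K1 * (S1 - complex_of_real G1 * un) + 0 + complex_of_real r * (S2 - complex_of_real G2 * un)))
      ({..n-1} \<union> {n} \<union> {n+1..})"
    by (intro has_sum_Un_disjoint w1 w2 w3) auto
  moreover have "{..n-1} \<union> {n} \<union> {n+1..} = (UNIV :: int set)" by auto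
  ultimately have wall: "(w has_sum (complex_of_real K1 * (S1 - complex_of_real G1 * un) + complex_of_real r * (S2 - complex_of_real G2 * un))) UNIV"
    by simp
  have "integral\<^sup>L M f = complex_of_real K1 * (S1 - complex_of_real G1 * un) + complex_of_real r * (S2 - complex_of_real G2 * un)"
    using has_sum_unique[OF PI[THEN conjunct2, folded w_def] wall] .
  then show ?thesis using PI unfolding f_def K1_def r_def un_def S1_def S2_def G1_def G2_def by simp
qed

end

theorem lemma1:
  fixes av :: "'a::field \<Rightarrow> real" and q :: nat and M :: "'a measure"
    and \<alpha> :: real and u :: "real \<Rightarrow> complex" and m :: int
  assumes K: "nonarch_local_field av q"
    and Haar: "haar_measure av M"
    and \<alpha>: "\<alpha> > 0"
    and sum1: "(\<lambda>k::int. real q powi k * norm (u (real q powi k))) summable_on {..m}"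
    and sum2: "(\<lambda>l::int. real q powr (-\<alpha> * l) * norm (u (real q powi l))) summable_on {m..}"
  shows "\<forall>(n::int) (x::'a). av x = real q powi n \<longrightarrow>
     (let d = (1 - real q powr \<alpha>) / (1 - real q powr (-\<alpha> - 1));
          f = (\<lambda>y. complex_of_real (av y powr (-\<alpha> - 1)) * (u (av (x - y)) - u (av x)))
      in integrable M f \<and>
         complex_of_real d * integral\<^sup>L M f =
           complex_of_real (d * (1 - 1 / real q) * real q powr (-(\<alpha> + 1) * n)) *
              (\<Sum>\<^sub>\<infinity>k\<in>{..n-1}. complex_of_real (real q powi k) * u (real q powi k))
         + complex_of_real (real q powr (-\<alpha> * n - 1) * (real q powr \<alpha> + real q - 2)
                              / (1 - real q powr (-\<alpha> - 1))) * u (real q powi n)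
         + complex_of_real (d * (1 - 1 / real q)) *
              (\<Sum>\<^sub>\<infinity>l\<in>{n+1..}. complex_of_real (real q powr (-\<alpha> * l)) * u (real q powi l)))"
proof -
  interpret NALFM av q M
    by (intro NALFM.intro NALF.intro NALFM_axioms.intro K Haar)
  show ?thesis
  proof (intro allI impI)
    fix n :: int and x :: 'a
    assume xn: "av x = real q powi n"
    note Mn = main[OF \<alpha> sum1 sum2 xn]
    define d where "d = (1 - real q powr \<alpha>) / (1 - real q powr (-\<alpha> - 1))"
    define P where "P = Q powr (real_of_int n * (-\<alpha> - 1))"
    define r where "r = 1 - 1 / Q"
    define G1 where "G1 = Q powi n / (Q - 1)"
    define G2 where "G2 = Q powr (-\<alpha> * (n + 1)) / (1 - Q powr (-\<alpha>))"
    define E where "E = real q powr (-\<alpha> * n - 1) * (real q powr \<alpha> + real q - 2) / (1 - real q powr (-\<alpha> - 1))"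
    define S1 where "S1 = (\<Sum>\<^sub>\<infinity>k\<in>{..n-1}. complex_of_real (real q powi k) * u (real q powi k))"
    define S2 where "S2 = (\<Sum>\<^sub>\<infinity>l\<in>{n+1..}. complex_of_real (real q powr (-\<alpha> * l)) * u (real q powi l))"
    define f where "f = (\<lambda>y. complex_of_real (av y powr (-\<alpha> - 1)) * (u (av (x - y)) - u (av x)))"
    have cE: "E = - (d * (P * r * G1 + r * G2))"
      unfolding E_def d_def P_def r_def G1_def G2_def using coef[OF \<alpha>, of n] by simp
    have eP: "real q powr (-(\<alpha> + 1) * real_of_int n) = P"
    proof -
      have "-(\<alpha> + 1) * real_of_int n = real_of_int n * (-\<alpha> - 1)" by (simp add: algebra_simps)
      then show ?thesis unfolding P_def by (simp only:)
    qed
    have I: "integrable M f"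
      "integral\<^sup>L M f = complex_of_real (P * r) * (S1 - complex_of_real G1 * u (Q powi n))
         + complex_of_real r * (S2 - complex_of_real G2 * u (Q powi n))"
      using Mn unfolding f_def P_def r_def G1_def G2_def S1_def S2_def by simp_all
    have ring: "(D::complex) * (PP * R * (T1 - H1 * U) + R * (T2 - H2 * U))
        = D * R * PP * T1 + (- (D * (PP * R * H1 + R * H2))) * U + D * R * T2" for D PP R T1 T2 H1 H2 U
      by (simp add: algebra_simps)
    have eq: "complex_of_real d * integral\<^sup>L M f =
       complex_of_real (d * r * P) * S1 + complex_of_real E * u (Q powi n) + complex_of_real (d * r) * S2"
      unfolding I(2) cE of_real_mult of_real_minus of_real_add by (rule ring)
    show "let d = (1 - real q powr \<alpha>) / (1 - real q powr (-\<alpha> - 1));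
          f = (\<lambda>y. complex_of_real (av y powr (-\<alpha> - 1)) * (u (av (x - y)) - u (av x)))
      in integrable M f \<and>
         complex_of_real d * integral\<^sup>L M f =
           complex_of_real (d * (1 - 1 / real q) * real q powr (-(\<alpha> + 1) * n)) *
              (\<Sum>\<^sub>\<infinity>k\<in>{..n-1}. complex_of_real (real q powi k) * u (real q powi k))
         + complex_of_real (real q powr (-\<alpha> * n - 1) * (real q powr \<alpha> + real q - 2)
                              / (1 - real q powr (-\<alpha> - 1))) * u (real q powi n)
         + complex_of_real (d * (1 - 1 / real q)) *
              (\<Sum>\<^sub>\<infinity>l\<in>{n+1..}. complex_of_real (real q powr (-\<alpha> * l)) * u (real q powi l))"
      unfolding Let_def d_def[symmetric] f_def[symmetric] r_def[symmetric] eP S1_def[symmetric] S2_def[symmetric]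
        E_def[symmetric]
      using I(1) eq by simp
  qed
qed

end
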